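(* In any $\{K_3,K_4\}$-decomposition of $K_{18}$ with $\alpha=11$, every vertex $x$ of $K_{18}$ satisfies $\alpha_x\in\{1,4\}$.
   Context: A $\{K_3,K_4\}$-decomposition of $K_v$ is a collection of subgraphs, each isomorphic to $K_3$ or $K_4$ (triples and quadruples), such that every edge of $K_v$ lies in exactly one of them. $\alpha$ is the number of copies of $K_3$ in the decomposition, and for a vertex $x$, $\alpha_x$ is the number of copies of $K_3$ in the decomposition containing $x$. *)

theory Defs
  imports Main
begin

definition K34_decomposition :: "'a set \<Rightarrow> 'a set set \<Rightarrow> bool" where
  "K34_decomposition V D \<longleftrightarrow>
     finite V \<and>
     (\<forall>B\<in>D. B \<subseteq> V \<and> (card B = 3 \<or> card B = 4)) \<and>
     (\<forall>x\<in>V. \<forall>y\<in>V. x \<noteq> y \<longrightarrow> (\<exists>!B. B \<in> D \<and> {x, y} \<subseteq> B))"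

definition alpha :: "'a set set \<Rightarrow> nat" where
  "alpha D = card {B\<in>D. card B = 3}"

definition alpha_at :: "'a set set \<Rightarrow> 'a \<Rightarrow> nat" where
  "alpha_at D x = card {B\<in>D. card B = 3 \<and> x \<in> B}"

end

theory Submission
  imports Defs
begin

lemma uniq_block:
  assumes "K34_decomposition V D" "u \<in> V" "w \<in> V" "u \<noteq> w"
    "B1 \<in> D" "B2 \<in> D" "{u,w} \<subseteq> B1" "{u,w} \<subseteq> B2"
  shows "B1 = B2"
  using assms unfolding K34_decomposition_def by metis

lemma finite_D:
  assumes "K34_decomposition V D" shows "finite D"
proof -
  have "D \<subseteq> Pow V" using assms unfolding K34_decomposition_def by auto
  moreover have "finite V" using assms unfolding K34_decomposition_def by auto
  ultimately show ?thesis by (meson finite_Pow_iff finite_subset)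
qed

lemma fin_blocks:
  assumes "K34_decomposition V D" "B \<in> D" shows "finite B" "card B = 3 \<or> card B = 4" "B \<subseteq> V"
  using assms unfolding K34_decomposition_def
  by (auto intro: finite_subset)

lemma degree_eq:
  assumes dec: "K34_decomposition V D" and xV: "x \<in> V"
  shows "card V - 1 = 2 * alpha_at D x + 3 * card {B\<in>D. card B = 4 \<and> x \<in> B}"
proof -
  define Dx where "Dx = {B\<in>D. x \<in> B}"
  have fD: "finite D" using finite_D[OF dec] .
  have fDx: "finite Dx" unfolding Dx_def using fD by auto
  have fV: "finite V" using dec unfolding K34_decomposition_def by auto
  have eqU: "V - {x} = (\<Union>B\<in>Dx. B - {x})"
  proof
    show "V - {x} \<subseteq> (\<Union>B\<in>Dx. B - {x})"
    proof
      fix y assume y: "y \<in> V - {x}"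
      then obtain B where "B \<in> D" "{x,y} \<subseteq> B"
        using dec xV unfolding K34_decomposition_def by (metis DiffE singletonI)
      then show "y \<in> (\<Union>B\<in>Dx. B - {x})" using y unfolding Dx_def by auto
    qed
    show "(\<Union>B\<in>Dx. B - {x}) \<subseteq> V - {x}"
      unfolding Dx_def using fin_blocks(3)[OF dec] by blast
  qed
  have "card (V - {x}) = (\<Sum>B\<in>Dx. card (B - {x}))"
    unfolding eqU
  proof (rule card_UN_disjoint[OF fDx])
    show "\<forall>i\<in>Dx. finite (i - {x})" unfolding Dx_def using fin_blocks(1)[OF dec] by auto
    show "\<forall>i\<in>Dx. \<forall>j\<in>Dx. i \<noteq> j \<longrightarrow> (i - {x}) \<inter> (j - {x}) = {}"
    proof (intro ballI impI)
      fix i j assume i: "i \<in> Dx" and j: "j \<in> Dx" and ij: "i \<noteq> j"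
      show "(i - {x}) \<inter> (j - {x}) = {}"
      proof (rule ccontr)
        assume "(i - {x}) \<inter> (j - {x}) \<noteq> {}"
        then obtain y where y: "y \<in> i" "y \<in> j" "y \<noteq> x" by auto
        have "y \<in> V" using y i fin_blocks(3)[OF dec] unfolding Dx_def by auto
        then have "i = j" using uniq_block[OF dec xV _ y(3)[symmetric], of i j] i j y
          unfolding Dx_def by auto
        then show False using ij by simp
      qed
    qed
  qed
  also have "\<dots> = (\<Sum>B\<in>Dx. if card B = 3 then 2 else 3)"
  proof (rule sum.cong)
    fix B assume "B \<in> Dx"
    then have "B \<in> D" "x \<in> B" unfolding Dx_def by auto
    then show "card (B - {x}) = (if card B = 3 then 2 else 3)"
      using fin_blocks[OF dec \<open>B \<in> D\<close>] by auto
  qed simp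
  also have "\<dots> = (\<Sum>B\<in>Dx \<inter> {B. card B = 3}. 2) + (\<Sum>B\<in>Dx \<inter> - {B. card B = 3}. 3)"
    by (rule sum.If_cases[OF fDx])
  also have "Dx \<inter> {B. card B = 3} = {B\<in>D. card B = 3 \<and> x \<in> B}" unfolding Dx_def by auto
  also have "Dx \<inter> - {B. card B = 3} = {B\<in>D. card B = 4 \<and> x \<in> B}"
    unfolding Dx_def using fin_blocks(2)[OF dec] by force
  finally show ?thesis using xV fV unfolding alpha_at_def by (simp add: mult.commute)
qed

lemma alpha_at_vals:
  assumes "card V = 18" "K34_decomposition V D" "x \<in> V"
  shows "alpha_at D x \<in> {1,4,7}"
proof -
  have "17 = 2 * alpha_at D x + 3 * card {B\<in>D. card B = 4 \<and> x \<in> B}"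
    using degree_eq[OF assms(2,3)] assms(1) by simp
  moreover have "\<And>a b::nat. 17 = 2 * a + 3 * b \<Longrightarrow> a \<in> {1,4,7}"
  proof -
    fix a b :: nat assume h: "17 = 2 * a + 3 * b"
    then have "b \<le> 5" by linarith
    then have "b = 0 \<or> b = 1 \<or> b = 2 \<or> b = 3 \<or> b = 4 \<or> b = 5" by linarith
    then show "a \<in> {1,4,7}" using h by (auto; presburger)
  qed
  ultimately show ?thesis by blast
qed

lemma alpha_at_T: "alpha_at D v = card {B\<in>{B\<in>D. card B = 3}. v \<in> B}"
  unfolding alpha_at_def by (rule arg_cong[where f=card]) auto

lemma sum_alpha:
  assumes dec: "K34_decomposition V D"
  shows "(\<Sum>v\<in>V. alpha_at D v) = 3 * alpha D"
proof -
  define T where "T = {B\<in>D. card B = 3}"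
  have fT: "finite T" using finite_D[OF dec] unfolding T_def by auto
  have fV: "finite V" using dec unfolding K34_decomposition_def by auto
  have "(\<Sum>v\<in>V. alpha_at D v) = (\<Sum>v\<in>V. \<Sum>B\<in>T. if v \<in> B then 1 else 0)"
  proof (rule sum.cong)
    fix v assume "v \<in> V"
    have "alpha_at D v = card {B\<in>T. v \<in> B}" unfolding T_def by (rule alpha_at_T)
    also have "\<dots> = (\<Sum>B\<in>T. if v \<in> B then 1 else 0)"
      using fT by (simp add: sum.If_cases Int_def)
    finally show "alpha_at D v = (\<Sum>B\<in>T. if v \<in> B then 1 else 0)" .
  qed simp
  also have "\<dots> = (\<Sum>B\<in>T. \<Sum>v\<in>V. if v \<in> B then 1 else 0)" by (rule sum.swap)
  also have "\<dots> = (\<Sum>B\<in>T. 3)"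
  proof (rule sum.cong)
    fix B assume B: "B \<in> T"
    then have "B \<subseteq> V" "card B = 3" unfolding T_def using fin_blocks[OF dec] by auto
    then have "V \<inter> {v. v \<in> B} = B" by auto
    then show "(\<Sum>v\<in>V. if v \<in> B then 1 else 0) = (3::nat)"
      using fV \<open>card B = 3\<close> by (simp add: sum.If_cases)
  qed simp
  also have "\<dots> = 3 * alpha D" unfolding alpha_def T_def by simp
  finally show ?thesis .
qed

theorem mainTheorem6:
  fixes V :: "'a set" and D :: "'a set set"
  assumes "card V = 18"
    and "K34_decomposition V D"
    and "alpha D = 11"
  shows "\<forall>x\<in>V. alpha_at D x \<in> {1, 4}"
proof
  fix x assume xV: "x \<in> V"
  have dec: "K34_decomposition V D" by fact
  have fV: "finite V" using dec unfolding K34_decomposition_def by auto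
  have vals: "\<And>v. v \<in> V \<Longrightarrow> alpha_at D v \<in> {1,4,7}"
    using alpha_at_vals[OF assms(1,2)] by blast
  show "alpha_at D x \<in> {1, 4}"
  proof (rule ccontr)
    assume "alpha_at D x \<notin> {1, 4}"
    then have ax: "alpha_at D x = 7" using vals[OF xV] by auto
    define T where "T = {B\<in>D. card B = 3}"
    define Tx where "Tx = {B\<in>T. x \<in> B}"
    define Oth where "Oth = T - Tx"
    have fT: "finite T" using finite_D[OF dec] unfolding T_def by auto
    have cT: "card T = 11" using assms(3) unfolding alpha_def T_def by simp
    have cTx: "card Tx = 7" using ax unfolding Tx_def T_def alpha_at_T .
    have cOth: "card Oth = 4" unfolding Oth_def
    proof -
      have "Tx \<subseteq> T" unfolding Tx_def by auto
      then have "card (T - Tx) = card T - card Tx" using fT by (meson card_Diff_subset rev_finite_subset)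
      then show "card (T - Tx) = 4" using cT cTx by simp
    qed
    have fOth: "finite Oth" unfolding Oth_def using fT by auto
    have big: "card {B\<in>Oth. u \<in> B} \<ge> 3" if u: "u \<in> V" "u \<noteq> x" "alpha_at D u \<ge> 4" for u
    proof -
      have e: "{B\<in>T. u \<in> B} = {B\<in>Oth. u \<in> B} \<union> {B\<in>Tx. u \<in> B}" unfolding Oth_def Tx_def by auto
      have "card {B\<in>Tx. u \<in> B} \<le> 1"
      proof -
        have "finite {B\<in>Tx. u \<in> B}" using fT unfolding Tx_def by auto
        moreover have "\<forall>a1\<in>{B\<in>Tx. u \<in> B}. \<forall>a2\<in>{B\<in>Tx. u \<in> B}. a1 = a2"
          using uniq_block[OF dec u(1) xV u(2)] unfolding Tx_def T_def by auto
        ultimately show ?thesis using card_le_Suc0_iff_eq[of "{B\<in>Tx. u \<in> B}"] by simp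
      qed
      moreover have "alpha_at D u = card {B\<in>T. u \<in> B}" unfolding T_def by (rule alpha_at_T)
      moreover have "card {B\<in>T. u \<in> B} \<le> card {B\<in>Oth. u \<in> B} + card {B\<in>Tx. u \<in> B}"
        unfolding e by (rule card_Un_le)
      ultimately show ?thesis using u(3) by linarith
    qed
    define S where "S = {v\<in>V - {x}. alpha_at D v \<ge> 4}"
    have fS: "finite S" unfolding S_def using fV by auto
    have s26: "(\<Sum>v\<in>V - {x}. alpha_at D v) = 26"
      using sum.remove[OF fV xV, of "alpha_at D"] sum_alpha[OF dec] assms(3) ax by simp
    have "\<exists>u\<in>S. \<exists>w\<in>S. u \<noteq> w"
    proof (rule ccontr)
      assume "\<not> ?thesis"
      then have "card S \<le> 1" using card_le_Suc0_iff_eq[OF fS] by auto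
      have "(\<Sum>v\<in>V - {x}. alpha_at D v) \<le> (\<Sum>v\<in>V - {x}. 1 + (if v \<in> S then 6 else 0))"
      proof (rule sum_mono)
        fix v assume "v \<in> V - {x}"
        then show "alpha_at D v \<le> 1 + (if v \<in> S then 6 else 0)"
          using vals[of v] unfolding S_def by auto
      qed
      also have "\<dots> = card (V - {x}) + (\<Sum>v\<in>V - {x}. (if v \<in> S then 6 else 0))"
        by (simp only: sum.distrib card_eq_sum)
      also have "(\<Sum>v\<in>V - {x}. (if v \<in> S then 6 else 0)) = (\<Sum>v\<in>(V - {x}) \<inter> {v. v \<in> S}. 6) + (\<Sum>v\<in>(V - {x}) \<inter> - {v. v \<in> S}. 0)"
        by (rule sum.If_cases) (use fV in auto)
      also have "(V - {x}) \<inter> {v. v \<in> S} = S" unfolding S_def by auto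
      finally have "(\<Sum>v\<in>V - {x}. alpha_at D v) \<le> card (V - {x}) + 6 * card S" by simp
      moreover have "card (V - {x}) = 17" using assms(1) xV fV by simp
      ultimately show False using s26 \<open>card S \<le> 1\<close> by linarith
    qed
    then obtain u w where uw: "u \<in> S" "w \<in> S" "u \<noteq> w" by blast
    have Ou: "card {B\<in>Oth. u \<in> B} \<ge> 3" using big uw(1) unfolding S_def by auto
    have Ow: "card {B\<in>Oth. w \<in> B} \<ge> 3" using big uw(2) unfolding S_def by auto
    have "card ({B\<in>Oth. u \<in> B} \<union> {B\<in>Oth. w \<in> B}) \<le> 4"
      using cOth fOth by (metis (no_types, lifting) Un_subset_iff card_mono mem_Collect_eq subsetI)
    moreover have "card ({B\<in>Oth. u \<in> B} \<union> {B\<in>Oth. w \<in> B}) + card ({B\<in>Oth. u \<in> B} \<inter> {B\<in>Oth. w \<in> B})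
       = card {B\<in>Oth. u \<in> B} + card {B\<in>Oth. w \<in> B}"
      using card_Un_Int[of "{B\<in>Oth. u \<in> B}" "{B\<in>Oth. w \<in> B}"] fOth by simp
    ultimately have c2: "card ({B\<in>Oth. u \<in> B} \<inter> {B\<in>Oth. w \<in> B}) \<ge> 2" using Ou Ow by linarith
    have "\<not> (\<forall>a1\<in>{B\<in>Oth. u \<in> B} \<inter> {B\<in>Oth. w \<in> B}. \<forall>a2\<in>{B\<in>Oth. u \<in> B} \<inter> {B\<in>Oth. w \<in> B}. a1 = a2)"
      using card_le_Suc0_iff_eq[of "{B\<in>Oth. u \<in> B} \<inter> {B\<in>Oth. w \<in> B}"] c2 fOth by auto
    moreover have "u \<in> V" "w \<in> V" using uw unfolding S_def by auto
    ultimately show False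
      using uniq_block[OF dec \<open>u \<in> V\<close> \<open>w \<in> V\<close> uw(3)] unfolding Oth_def T_def by auto
  qed
qed

end
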